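(* Let $q\in\mathbb{C}$, let $c_i(q,\pi)\in\mathbb{C}$ ($p\ge1$, $1\le i\le p$, $\pi\in\mathfrak{S}_p$) be coefficients, and for $p\ge1$ let $$\mathcal{E}_p=\sum_{k_1,\ldots,k_p}\sum_{\pi\in\mathfrak{S}_p}\sum_{i=1}^p c_i(q,\pi)\,E(k_{\pi(i)})\,a^\dagger(k_{\pi(p)})\cdots a^\dagger(k_{\pi(1)})\,a(k_1)\cdots a(k_p),$$ and $$R_p(q,X)=\alpha_p\sum_{\pi\in\mathfrak{S}_p}\sum_{i=1}^p c_i(q,\pi)X^{i-1}\pi\in\mathbb{C}[X][\mathfrak{S}_p].$$ Then for every $n$-particle state $K$ (an ordered $n$-tuple of distinct momenta) and every $1\le p\le n$, $$\mathcal{E}_pK=\xi\Bigl(X^{n-p}\sum_{J\subset K,\ |J|=p}q^{I_K\left((K-J)\sqcup J\right)}\,(K-J)\sqcup R_p(q,X)J\Bigr).$$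
   Context: Operators $a(k)$, indexed by momenta $k$, with adjoints $a^\dagger(k)$, satisfy $a(k)a^\dagger(\ell)-q\,a^\dagger(\ell)a(k)=\delta_{k,\ell}$ and $a(k)|0\rangle=0$. An ordered set $K=[k_1,\dots,k_n]$ of pairwise distinct momenta is identified with the state $a^\dagger(k_n)\cdots a^\dagger(k_1)|0\rangle$, and formal linear combinations of such ordered sets with the corresponding linear combinations of states. $E(k)$ is the single-particle energy of momentum $k$. For $\pi\in\mathfrak{S}_n$, $I(\pi)$ is the number of inversions (pairs $i<j$ with $\pi(i)>\pi(j)$); $\alpha_p=\sum_{\rho\in\mathfrak{S}_p}q^{I(\rho)}\rho\in\mathbb{C}[\mathfrak{S}_p]$. The group $\mathfrak{S}_n$ acts on ordered $n$-element sets by permuting positions, extended linearly to the group algebra and to polynomials in $X$ (with $X$ commuting). For an ordered set $A$ and $\sigma\in\mathfrak{S}_n$, $I_A(\sigma A):=I(\sigma)$. A subset $J\subset K$ carries the order induced from $K$; $K-J$ is the complement with induced order; for disjoint ordered sets $A_1,A_2$, $A_1\sqcup A_2$ is the ordered set listing the elements of $A_1$ (in order) followed by those of $A_2$ (in order), extended bilinearly (and with powers of $X$ carried along) to linear combinations. The evaluation map $\xi$ is the linear map on polynomials in $X$ with coefficients formal linear combinations of ordered $n$-sets defined by $\xi(B\,X^{i-1})=E(B(i))\,B$, where $B(i)$ is the $i$-th element of the ordered set $B$. *)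

theory Defs
  imports Complex_Main "HOL-Library.Function_Algebras" "HOL-Library.Groups_Big_Fun"
    "HOL-Combinatorics.Permutations"
begin

(* Fock space: formal linear combinations of words (lists) of momenta,
   represented as coefficient functions.  The word [k1,...,kn] is the state
   a\<^sup>\<dagger>(kn)...a\<^sup>\<dagger>(k1)|0>. *)
type_synonym 'm vec = "'m list \<Rightarrow> complex"

definition vac :: "'m vec" where
  "vac = (\<lambda>w. if w = [] then 1 else 0)"

definition create :: "'m \<Rightarrow> 'm vec \<Rightarrow> 'm vec" where
  "create k v = (\<lambda>w. if w \<noteq> [] \<and> last w = k then v (butlast w) else 0)"

(* annihilation operator a(k): the q-Fock representation, determined by
   a(k)a\<^sup>\<dagger>(l) - q a\<^sup>\<dagger>(l)a(k) = \<delta>_{k,l} and a(k)|0> = 0 *)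
definition annih :: "complex \<Rightarrow> 'm \<Rightarrow> 'm vec \<Rightarrow> 'm vec" where
  "annih q k v = (\<lambda>w. \<Sum>j\<le>length w. q ^ (length w - j) * v (take j w @ k # drop j w))"

definition ket :: "'m list \<Rightarrow> 'm vec" where
  "ket K = fold create K vac"

definition perms :: "nat \<Rightarrow> (nat \<Rightarrow> nat) set" where
  "perms p = {\<sigma>. \<sigma> permutes {1..p}}"

definition inv_count :: "nat \<Rightarrow> (nat \<Rightarrow> nat) \<Rightarrow> nat" where
  "inv_count p \<sigma> = card {(i, j). 1 \<le> i \<and> i < j \<and> j \<le> p \<and> \<sigma> i > \<sigma> j}"

definition act :: "(nat \<Rightarrow> nat) \<Rightarrow> 'm list \<Rightarrow> 'm list" where
  "act \<sigma> A = map (\<lambda>i. A ! (\<sigma> i - 1)) [1..<length A + 1]"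

definition IA :: "'m list \<Rightarrow> 'm list \<Rightarrow> nat" where
  "IA A B = inv_count (length A) (THE \<sigma>. \<sigma> permutes {1..length A} \<and> act \<sigma> A = B)"

definition Eop :: "(nat \<Rightarrow> nat \<Rightarrow> (nat \<Rightarrow> nat) \<Rightarrow> complex) \<Rightarrow> ('m \<Rightarrow> complex) \<Rightarrow> complex
    \<Rightarrow> nat \<Rightarrow> 'm vec \<Rightarrow> 'm vec" where
  "Eop c E q p v = (\<Sum>ks. if length ks = p then
      (\<Sum>\<pi>\<in>perms p. (\<lambda>w. (\<Sum>i=1..p. c p i \<pi> * E (ks ! (\<pi> i - 1))) *
          fold create (map (\<lambda>i. ks ! (\<pi> i - 1)) [1..<p+1]) (foldr (annih q) ks v) w))
      else 0)"

(* polynomials in X with coefficients in formal combinations of ordered sets: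
   P e B = coefficient of B X^e *)
type_synonym 'm xvec = "nat \<Rightarrow> 'm list \<Rightarrow> complex"

(* evaluation map \<xi>(B X^(i-1)) = E(B(i)) B *)
definition xi :: "('m \<Rightarrow> complex) \<Rightarrow> 'm xvec \<Rightarrow> 'm vec" where
  "xi E P = (\<lambda>B. \<Sum>e<length B. E (B ! e) * P e B)"

(* elements of C[X][S_p]: g \<sigma> e = coefficient of X^e \<sigma> *)
type_synonym galg = "(nat \<Rightarrow> nat) \<Rightarrow> nat \<Rightarrow> complex"

definition ga_mult :: "nat \<Rightarrow> galg \<Rightarrow> galg \<Rightarrow> galg" where
  "ga_mult p g h = (\<lambda>\<sigma> e. \<Sum>\<rho>\<in>perms p. \<Sum>\<pi>\<in>perms p.
      if \<rho> \<circ> \<pi> = \<sigma> then (\<Sum>a\<le>e. g \<rho> a * h \<pi> (e - a)) else 0)"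

definition alpha :: "complex \<Rightarrow> nat \<Rightarrow> galg" where
  "alpha q p = (\<lambda>\<sigma> e. if \<sigma> \<in> perms p \<and> e = 0 then q ^ inv_count p \<sigma> else 0)"

definition Rsum :: "(nat \<Rightarrow> nat \<Rightarrow> (nat \<Rightarrow> nat) \<Rightarrow> complex) \<Rightarrow> nat \<Rightarrow> galg" where
  "Rsum c p = (\<lambda>\<pi> e. if \<pi> \<in> perms p then (\<Sum>i=1..p. if e = i - 1 then c p i \<pi> else 0) else 0)"

definition Rp :: "(nat \<Rightarrow> nat \<Rightarrow> (nat \<Rightarrow> nat) \<Rightarrow> complex) \<Rightarrow> complex \<Rightarrow> nat \<Rightarrow> galg" where
  "Rp c q p = ga_mult p (alpha q p) (Rsum c p)"

definition ga_act :: "nat \<Rightarrow> galg \<Rightarrow> 'm list \<Rightarrow> 'm xvec" where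
  "ga_act p g J = (\<lambda>e B. \<Sum>\<sigma>\<in>perms p. if act \<sigma> J = B then g \<sigma> e else 0)"

definition conc :: "'m list \<Rightarrow> 'm xvec \<Rightarrow> 'm xvec" where
  "conc L P = (\<lambda>e B. if take (length L) B = L then P e (drop (length L) B) else 0)"

definition Xpow :: "nat \<Rightarrow> 'm xvec \<Rightarrow> 'm xvec" where
  "Xpow m P = (\<lambda>e B. if m \<le> e then P (e - m) B else 0)"

end

theory Submission imports Defs begin

definition dl :: "'m list \<Rightarrow> 'm vec" where
  "dl U = (\<lambda>w. if w = U then 1 else 0)"

lemma sum_fun_app: "(sum f A) x = sum (\<lambda>a. f a x) A"
  by (induction A rule: infinite_finite_induct) auto

lemma create_dl: "create k (\<lambda>w. c * dl U w) = (\<lambda>w. c * dl (U @ [k]) w)"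
  unfolding create_def dl_def
  by (auto simp: fun_eq_iff)

lemma fold_create_dl: "fold create L (\<lambda>w. c * dl U w) = (\<lambda>w. c * dl (U @ L) w)"
  by (induction L arbitrary: U) (simp_all add: create_dl)

lemma vac_dl: "vac = dl []" by (simp add: vac_def dl_def fun_eq_iff)

lemma ket_dl: "ket K = dl K"
proof -
  have "fold create K (\<lambda>w. 1 * dl [] w) = (\<lambda>w. 1 * dl ([] @ K) w)" by (rule fold_create_dl)
  then show ?thesis unfolding ket_def vac_dl by simp
qed

lemma annih_lin: "annih q k (\<lambda>w. c * v w) = (\<lambda>w. c * annih q k v w)"
  unfolding annih_def by (simp add: fun_eq_iff sum_distrib_left mult_ac)

lemma annih_dl_in:
  assumes "distinct (a @ k # b)"
  shows "annih q k (dl (a @ k # b)) = (\<lambda>w. q ^ length b * dl (a @ b) w)"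
proof
  fix w
  have ka: "k \<notin> set a" and kb: "k \<notin> set b" using assms by auto
  have eq: "(take j w @ k # drop j w = a @ k # b) \<longleftrightarrow> (j = length a \<and> w = a @ b)" if "j \<le> length w" for j
  proof
    assume h: "take j w @ k # drop j w = a @ k # b"
    have "distinct (take j w @ k # drop j w)" using h assms by simp
    then have "k \<notin> set (take j w)" "k \<notin> set (drop j w)" by auto
    then have "take j w = a \<and> drop j w = b" using h append_Cons_eq_iff by metis
    then show "j = length a \<and> w = a @ b" using that
      by (metis append_take_drop_id length_take min.absorb2)
  next
    assume "j = length a \<and> w = a @ b"
    then show "take j w @ k # drop j w = a @ k # b" by simp
  qed
  have "annih q k (dl (a @ k # b)) w = (\<Sum>j\<le>length w. if j = length a \<and> w = a @ b then q ^ (length w - j) else 0)"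
    unfolding annih_def dl_def by (rule sum.cong) (use eq in auto)
  also have "\<dots> = q ^ length b * dl (a @ b) w"
    by (cases "w = a @ b") (auto simp: dl_def)
  finally show "annih q k (dl (a @ k # b)) w = q ^ length b * dl (a @ b) w" .
qed

lemma annih_dl_notin:
  assumes "k \<notin> set U"
  shows "annih q k (dl U) = (\<lambda>w. 0 * dl U w)"
  unfolding annih_def dl_def using assms by (auto simp: fun_eq_iff intro!: sum.neutral)

fun bef :: "'m list \<Rightarrow> 'm \<Rightarrow> 'm \<Rightarrow> bool" where
  "bef [] x y = False"
| "bef (a # L) x y = ((a = x \<and> y \<in> set L) \<or> bef L x y)"

lemma bef_filter: "bef (filter P L) x y \<longleftrightarrow> P x \<and> P y \<and> bef L x y"
  by (induction L) auto

lemma bef_append: "bef (A @ B) x y \<longleftrightarrow> bef A x y \<or> bef B x y \<or> (x \<in> set A \<and> y \<in> set B)"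
  by (induction A) auto

lemma bef_set: "bef L x y \<Longrightarrow> x \<in> set L \<and> y \<in> set L"
  by (induction L) auto

lemma bef_neq: "distinct L \<Longrightarrow> bef L x y \<Longrightarrow> x \<noteq> y"
  by (induction L) (auto dest: bef_set)

lemma bef_asym: "distinct L \<Longrightarrow> bef L x y \<Longrightarrow> \<not> bef L y x"
  by (induction L) (auto dest: bef_set)

lemma bef_nth: "distinct L \<Longrightarrow> a < length L \<Longrightarrow> b < length L \<Longrightarrow> bef L (L ! a) (L ! b) \<longleftrightarrow> a < b"
proof (induction L arbitrary: a b)
  case Nil then show ?case by simp
next
  case (Cons c L)
  show ?case
  proof (cases a)
    case 0
    then show ?thesis using Cons.prems
      by (cases b) (auto dest: bef_set simp: nth_mem)
  next
    case (Suc a')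
    then show ?thesis using Cons
      by (cases b) (auto dest: bef_set simp: nth_mem)
  qed
qed

lemma bef_split: "distinct (a @ k # b) \<Longrightarrow> {y \<in> set (a @ k # b). bef (a @ k # b) k y} = set b"
  by (auto simp: bef_append dest: bef_set)

lemma annih_dl:
  assumes "distinct U"
  shows "annih q k (dl U) = (\<lambda>w. (if k \<in> set U then q ^ card {y \<in> set U. bef U k y} else 0)
                                 * dl (filter (\<lambda>x. x \<noteq> k) U) w)"
proof (cases "k \<in> set U")
  case True
  then obtain a b where U: "U = a @ k # b" by (meson split_list)
  have d: "distinct (a @ k # b)" using assms U by simp
  have fa: "filter (\<lambda>x. x \<noteq> k) a = a" "filter (\<lambda>x. x \<noteq> k) b = b"
    using d by (auto simp: filter_id_conv)
  then have f: "filter (\<lambda>x. x \<noteq> k) U = a @ b" using U by simp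
  have "card {y \<in> set U. bef U k y} = length b"
    using bef_split[OF d] d U by (simp add: distinct_card)
  then show ?thesis using annih_dl_in[OF d, of q] True U f by simp
next
  case False
  then show ?thesis using annih_dl_notin[OF False, of q] by simp
qed

definition g :: "'m list \<Rightarrow> 'm list \<Rightarrow> nat" where
  "g K ks = (\<Sum>x\<in>set ks. card {y \<in> set K. bef K x y \<and> (y \<notin> set ks \<or> bef ks y x)})"

lemma g_Cons:
  assumes "distinct K" "k \<notin> set ks"
  shows "g K (k # ks) = card {y \<in> set K. y \<notin> set ks \<and> bef K k y} + g K ks"
proof -
  have "g K (k # ks) = card {y \<in> set K. bef K k y \<and> (y \<notin> set (k # ks) \<or> bef (k # ks) y k)}
     + (\<Sum>x\<in>set ks. card {y \<in> set K. bef K x y \<and> (y \<notin> set (k # ks) \<or> bef (k # ks) y x)})"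
    unfolding g_def using assms(2) by simp
  also have "card {y \<in> set K. bef K k y \<and> (y \<notin> set (k # ks) \<or> bef (k # ks) y k)}
      = card {y \<in> set K. y \<notin> set ks \<and> bef K k y}"
    using assms by (intro arg_cong[where f=card]) (auto dest: bef_set bef_neq)
  also have "(\<Sum>x\<in>set ks. card {y \<in> set K. bef K x y \<and> (y \<notin> set (k # ks) \<or> bef (k # ks) y x)})
      = g K ks"
    unfolding g_def using assms(2) by (intro sum.cong refl arg_cong[where f=card]) auto
  finally show ?thesis .
qed

lemma foldr_annih:
  assumes "distinct K"
  shows "foldr (annih q) ks (dl K) = (\<lambda>w. (if distinct ks \<and> set ks \<subseteq> set K then q ^ g K ks else 0)
             * dl (filter (\<lambda>x. x \<notin> set ks) K) w)"
proof (induction ks)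
  case Nil
  then show ?case by (simp add: g_def)
next
  case (Cons k ks)
  define K' where "K' = filter (\<lambda>x. x \<notin> set ks) K"
  define C where "C = (if distinct ks \<and> set ks \<subseteq> set K then q ^ g K ks else 0)"
  have dK': "distinct K'" using assms K'_def by simp
  have fil: "filter (\<lambda>x. x \<noteq> k) K' = filter (\<lambda>x. x \<notin> set (k # ks)) K"
    unfolding K'_def by (auto simp: filter_filter intro: filter_cong)
  have kK': "k \<in> set K' \<longleftrightarrow> k \<in> set K \<and> k \<notin> set ks" unfolding K'_def by auto
  have cardeq: "card {y \<in> set K'. bef K' k y} = card {y \<in> set K. y \<notin> set ks \<and> bef K k y}" if "k \<notin> set ks"
    unfolding K'_def using that by (intro arg_cong[where f=card]) (auto simp: bef_filter)
  have "foldr (annih q) (k # ks) (dl K) = annih q k (\<lambda>w. C * dl K' w)"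
    using Cons.IH by (simp add: C_def K'_def)
  also have "\<dots> = (\<lambda>w. C * annih q k (dl K') w)" by (rule annih_lin)
  also have "\<dots> = (\<lambda>w. (C * (if k \<in> set K' then q ^ card {y \<in> set K'. bef K' k y} else 0))
                 * dl (filter (\<lambda>x. x \<notin> set (k # ks)) K) w)"
    by (simp add: annih_dl[OF dK'] fil fun_eq_iff)
  also have "\<dots> = (\<lambda>w. (if distinct (k # ks) \<and> set (k # ks) \<subseteq> set K then q ^ g K (k # ks) else 0)
             * dl (filter (\<lambda>x. x \<notin> set (k # ks)) K) w)"
    using assms by (auto simp: C_def kK' cardeq g_Cons power_add fun_eq_iff)
  finally show ?case .
qed

lemma length_act[simp]: "length (act \<sigma> L) = length L"
  by (simp add: act_def del: upt_Suc)

lemma nth_act: "i < length L \<Longrightarrow> act \<sigma> L ! i = L ! (\<sigma> (Suc i) - 1)"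
  by (simp add: act_def del: upt_Suc)

lemma perm_range:
  assumes "\<sigma> permutes {1..n}" "1 \<le> i" "i \<le> n"
  shows "1 \<le> \<sigma> i \<and> \<sigma> i \<le> n"
  using permutes_in_image[OF assms(1), of i] assms by auto

lemma act_comp:
  assumes "\<pi> permutes {1..length L}"
  shows "act \<pi> (act \<tau> L) = act (\<tau> \<circ> \<pi>) L"
proof (rule nth_equalityI)
  fix i assume "i < length (act \<pi> (act \<tau> L))"
  then have i: "i < length L" by simp
  have r: "1 \<le> \<pi> (Suc i) \<and> \<pi> (Suc i) \<le> length L" using perm_range[OF assms, of "Suc i"] i by simp
  have "act \<tau> L ! (\<pi> (Suc i) - 1) = L ! (\<tau> (Suc (\<pi> (Suc i) - 1)) - 1)"
    by (rule nth_act) (use r in arith)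
  then show "act \<pi> (act \<tau> L) ! i = act (\<tau> \<circ> \<pi>) L ! i"
    using i r by (simp add: nth_act)
qed simp

lemma distinct_act:
  assumes "distinct L" "\<sigma> permutes {1..length L}"
  shows "distinct (act \<sigma> L)"
proof -
  have "inj_on (\<lambda>i. L ! (\<sigma> i - 1)) {1..<length L + 1}"
  proof (rule inj_onI)
    fix i j assume i: "i \<in> {1..<length L + 1}" and j: "j \<in> {1..<length L + 1}"
      and e: "L ! (\<sigma> i - 1) = L ! (\<sigma> j - 1)"
    have ri: "1 \<le> \<sigma> i \<and> \<sigma> i \<le> length L" using perm_range[OF assms(2), of i] i by auto
    have rj: "1 \<le> \<sigma> j \<and> \<sigma> j \<le> length L" using perm_range[OF assms(2), of j] j by auto
    have "\<sigma> i - 1 = \<sigma> j - 1" using e ri rj assms(1) nth_eq_iff_index_eq by fastforce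
    then have "\<sigma> i = \<sigma> j" using ri rj by arith
    then show "i = j" using permutes_inj[OF assms(2)] by (simp add: inj_eq)
  qed
  then show ?thesis unfolding act_def by (simp add: distinct_map del: upt_Suc)
qed

lemma set_act_sub:
  assumes "\<sigma> permutes {1..length L}"
  shows "set (act \<sigma> L) \<subseteq> set L"
proof
  fix x assume "x \<in> set (act \<sigma> L)"
  then obtain i where i: "i < length L" "x = act \<sigma> L ! i" by (auto simp: in_set_conv_nth)
  have r: "1 \<le> \<sigma> (Suc i) \<and> \<sigma> (Suc i) \<le> length L" using perm_range[OF assms, of "Suc i"] i by simp
  have "\<sigma> (Suc i) - 1 < length L" using r by arith
  then show "x \<in> set L" using i by (simp add: nth_act)
qed

lemma set_act:
  assumes "distinct L" "\<sigma> permutes {1..length L}"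
  shows "set (act \<sigma> L) = set L"
proof (rule card_subset_eq)
  show "card (set (act \<sigma> L)) = card (set L)"
    using distinct_act[OF assms] assms(1) by (simp add: distinct_card)
qed (use set_act_sub[OF assms(2)] in auto)

lemma act_inj:
  assumes "distinct L" "\<sigma> permutes {1..length L}" "\<sigma>' permutes {1..length L}"
    and "act \<sigma> L = act \<sigma>' L"
  shows "\<sigma> = \<sigma>'"
proof
  fix i show "\<sigma> i = \<sigma>' i"
  proof (cases "i \<in> {1..length L}")
    case True
    then obtain i0 where i0: "i = Suc i0" "i0 < length L" by (cases i) auto
    have r: "1 \<le> \<sigma> i \<and> \<sigma> i \<le> length L" using perm_range[OF assms(2), of i] True by auto
    have r': "1 \<le> \<sigma>' i \<and> \<sigma>' i \<le> length L" using perm_range[OF assms(3), of i] True by auto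
    have "L ! (\<sigma> i - 1) = L ! (\<sigma>' i - 1)"
      using arg_cong[OF assms(4), of "\<lambda>l. l ! i0"] i0 by (simp add: nth_act)
    then have "\<sigma> i - 1 = \<sigma>' i - 1" using r r' assms(1) nth_eq_iff_index_eq by fastforce
    then show ?thesis using r r' by arith
  next
    case False
    then show ?thesis using assms(2,3) by (simp add: permutes_not_in)
  qed
qed

lemma act_ex:
  assumes "distinct L" "distinct M" "set M = set L"
  shows "\<exists>\<sigma>. \<sigma> permutes {1..length L} \<and> act \<sigma> L = M"
proof -
  let ?n = "length L"
  have lenM: "length M = ?n" using assms distinct_card by metis
  define ix where "ix m = (THE j. j < ?n \<and> L ! j = m)" for m
  have ix: "ix m < ?n \<and> L ! ix m = m" if mL: "m \<in> set L" for m
  proof -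
    obtain j where j: "j < ?n" "L ! j = m" using mL by (auto simp: in_set_conv_nth)
    have "\<exists>!j. j < ?n \<and> L ! j = m"
      using j assms(1) nth_eq_iff_index_eq by (intro ex1I[of _ j]) auto
    then show ?thesis unfolding ix_def by (rule theI')
  qed
  define \<sigma> where "\<sigma> i = (if i \<in> {1..?n} then Suc (ix (M ! (i - 1))) else i)" for i
  have Mi: "M ! (i - 1) \<in> set L" if "i \<in> {1..?n}" for i
  proof -
    have "i - 1 < length M" using that lenM by auto
    then show ?thesis using assms(3) nth_mem by metis
  qed
  have img: "\<sigma> ` {1..?n} \<subseteq> {1..?n}"
    using ix Mi by (auto simp: \<sigma>_def Suc_le_eq)
  have inj: "inj_on \<sigma> {1..?n}"
  proof (rule inj_onI)
    fix i j assume i: "i \<in> {1..?n}" and j: "j \<in> {1..?n}" and e: "\<sigma> i = \<sigma> j"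
    then have "ix (M ! (i - 1)) = ix (M ! (j - 1))" by (simp add: \<sigma>_def)
    then have "M ! (i - 1) = M ! (j - 1)" using ix[OF Mi[OF i]] ix[OF Mi[OF j]] by metis
    moreover have "i - 1 < length M" "j - 1 < length M" using i j lenM by auto
    ultimately have "i - 1 = j - 1" using assms(2) nth_eq_iff_index_eq by metis
    then show "i = j" using i j by (simp add: Suc_le_eq) arith
  qed
  have "\<sigma> permutes {1..?n}"
  proof (rule bij_imp_permutes)
    show "bij_betw \<sigma> {1..?n} {1..?n}"
      using endo_inj_surj[OF _ img inj] inj by (simp add: bij_betw_def)
  qed (auto simp: \<sigma>_def)
  moreover have "act \<sigma> L = M"
  proof (rule nth_equalityI)
    fix i assume "i < length (act \<sigma> L)"
    then have i: "i < ?n" by simp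
    then have "Suc i \<in> {1..?n}" by simp
    then show "act \<sigma> L ! i = M ! i"
      using i ix[OF Mi[of "Suc i"]] by (simp add: nth_act \<sigma>_def)
  qed (simp add: lenM)
  ultimately show ?thesis by blast
qed

lemma card_pairs:
  assumes "finite A"
  shows "card {(x, y). x \<in> A \<and> y \<in> A \<and> P x y} = (\<Sum>x\<in>A. card {y \<in> A. P x y})"
proof -
  have "{(x, y). x \<in> A \<and> y \<in> A \<and> P x y} = (SIGMA x:A. {y \<in> A. P x y})" by auto
  then show ?thesis using assms by simp
qed

lemma inv_bef:
  assumes dL: "distinct L" and sp: "\<sigma> permutes {1..length L}"
  shows "inv_count (length L) \<sigma> = card {(x, y). x \<in> set L \<and> y \<in> set L \<and> bef L x y \<and> bef (act \<sigma> L) y x}"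
proof -
  let ?n = "length L"
  let ?A = "{(i, j). 1 \<le> i \<and> i < j \<and> j \<le> ?n \<and> \<sigma> i > \<sigma> j}"
  let ?B = "{(x, y). x \<in> set L \<and> y \<in> set L \<and> bef L x y \<and> bef (act \<sigma> L) y x}"
  define h where "h = (\<lambda>(i, j). (L ! (\<sigma> j - 1), L ! (\<sigma> i - 1)))"
  have dA: "distinct (act \<sigma> L)" using distinct_act[OF dL sp] .
  have rng: "1 \<le> \<sigma> i \<and> \<sigma> i \<le> ?n" if "1 \<le> i" "i \<le> ?n" for i
    using perm_range[OF sp] that by blast
  have actn: "act \<sigma> L ! (i - 1) = L ! (\<sigma> i - 1)" if "1 \<le> i" "i \<le> ?n" for i
    using that nth_act[of "i - 1" L \<sigma>] by simp
  have inj: "inj_on h ?A"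
  proof (rule inj_onI)
    fix a b assume a: "a \<in> ?A" and b: "b \<in> ?A" and e: "h a = h b"
    obtain i j where ij: "a = (i, j)" by (cases a)
    obtain i' j' where ij': "b = (i', j')" by (cases b)
    have r: "1 \<le> \<sigma> i \<and> \<sigma> i \<le> ?n" "1 \<le> \<sigma> j \<and> \<sigma> j \<le> ?n"
        "1 \<le> \<sigma> i' \<and> \<sigma> i' \<le> ?n" "1 \<le> \<sigma> j' \<and> \<sigma> j' \<le> ?n"
      using a b ij ij' rng by auto
    have "L ! (\<sigma> j - 1) = L ! (\<sigma> j' - 1)" "L ! (\<sigma> i - 1) = L ! (\<sigma> i' - 1)"
      using e ij ij' by (auto simp: h_def)
    moreover have "\<sigma> j - 1 < ?n" "\<sigma> j' - 1 < ?n" "\<sigma> i - 1 < ?n" "\<sigma> i' - 1 < ?n" using r by auto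
    ultimately have "\<sigma> j - 1 = \<sigma> j' - 1" "\<sigma> i - 1 = \<sigma> i' - 1"
      using dL nth_eq_iff_index_eq by metis+
    then have "\<sigma> j = \<sigma> j'" "\<sigma> i = \<sigma> i'" using r by arith+
    then have "j = j'" "i = i'" using permutes_inj[OF sp] by (auto simp: inj_eq)
    then show "a = b" using ij ij' by simp
  qed
  have img: "h ` ?A = ?B"
  proof
    show "h ` ?A \<subseteq> ?B"
    proof
      fix z assume "z \<in> h ` ?A"
      then obtain i j where ij: "1 \<le> i" "i < j" "j \<le> ?n" "\<sigma> i > \<sigma> j" and z: "z = h (i, j)" by auto
      have r: "1 \<le> \<sigma> i \<and> \<sigma> i \<le> ?n" "1 \<le> \<sigma> j \<and> \<sigma> j \<le> ?n" using ij rng by auto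
      have b1: "bef L (L ! (\<sigma> j - 1)) (L ! (\<sigma> i - 1))"
        using bef_nth[OF dL, of "\<sigma> j - 1" "\<sigma> i - 1"] r ij by auto
      have b2: "bef (act \<sigma> L) (act \<sigma> L ! (i - 1)) (act \<sigma> L ! (j - 1))"
        using bef_nth[OF dA, of "i - 1" "j - 1"] ij by auto
      have "L ! (\<sigma> j - 1) \<in> set L" "L ! (\<sigma> i - 1) \<in> set L" using r by auto
      then show "z \<in> ?B" using b1 b2 actn[of i] actn[of j] ij z by (auto simp: h_def)
    qed
  next
    show "?B \<subseteq> h ` ?A"
    proof
      fix z assume "z \<in> ?B"
      then obtain x y where z: "z = (x, y)" and xL: "x \<in> set L" and yL: "y \<in> set L"
        and b1: "bef L x y" and b2: "bef (act \<sigma> L) y x" by auto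
      have sA: "set (act \<sigma> L) = set L" using set_act[OF dL sp] .
      have "x \<in> set (act \<sigma> L)" "y \<in> set (act \<sigma> L)" using xL yL sA by auto
      then obtain j0 i0 where j0: "j0 < ?n" "x = act \<sigma> L ! j0" and i0: "i0 < ?n" "y = act \<sigma> L ! i0"
        by (metis in_set_conv_nth length_act)
      have "i0 < j0" using bef_nth[OF dA, of i0 j0] b2 i0 j0 by simp
      let ?i = "Suc i0" and ?j = "Suc j0"
      have x: "x = L ! (\<sigma> ?j - 1)" and y: "y = L ! (\<sigma> ?i - 1)"
        using j0 i0 actn[of ?j] actn[of ?i] by auto
      have r: "1 \<le> \<sigma> ?i \<and> \<sigma> ?i \<le> ?n" "1 \<le> \<sigma> ?j \<and> \<sigma> ?j \<le> ?n" using i0 j0 rng by auto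
      have "\<sigma> ?j - 1 < \<sigma> ?i - 1" using bef_nth[OF dL, of "\<sigma> ?j - 1" "\<sigma> ?i - 1"] b1 x y r by auto
      then have "\<sigma> ?j < \<sigma> ?i" by arith
      then have "(?i, ?j) \<in> ?A" using \<open>i0 < j0\<close> j0 by auto
      moreover have "z = h (?i, ?j)" using z x y by (simp add: h_def)
      ultimately show "z \<in> h ` ?A" by blast
    qed
  qed
  have "inv_count ?n \<sigma> = card ?A" by (simp add: inv_count_def)
  also have "\<dots> = card (h ` ?A)" using card_image[OF inj] by simp
  also have "\<dots> = card ?B" using img by simp
  finally show ?thesis .
qed

lemma IA_eq:
  assumes dK: "distinct K" and SK: "S \<subseteq> set K"
  shows "IA K (filter (\<lambda>x. x \<notin> S) K @ filter (\<lambda>x. x \<in> S) K)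
       = (\<Sum>x\<in>S. card {y \<in> set K. y \<notin> S \<and> bef K x y})"
proof -
  let ?M = "filter (\<lambda>x. x \<notin> S) K @ filter (\<lambda>x. x \<in> S) K"
  have dM: "distinct ?M" using dK by auto
  have sM: "set ?M = set K" by auto
  obtain \<sigma> where sp: "\<sigma> permutes {1..length K}" and aM: "act \<sigma> K = ?M"
    using act_ex[OF dK dM sM] by blast
  have the: "(THE \<sigma>. \<sigma> permutes {1..length K} \<and> act \<sigma> K = ?M) = \<sigma>"
    using sp aM act_inj[OF dK] by (intro the_equality) auto
  have "IA K ?M = inv_count (length K) \<sigma>" unfolding IA_def the ..
  also have "\<dots> = card {(x, y). x \<in> set K \<and> y \<in> set K \<and> bef K x y \<and> bef ?M y x}"
    using inv_bef[OF dK sp] aM by simp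
  also have "\<dots> = (\<Sum>x\<in>set K. card {y \<in> set K. bef K x y \<and> bef ?M y x})"
    by (rule card_pairs) simp
  also have "\<dots> = (\<Sum>x\<in>set K. if x \<in> S then card {y \<in> set K. y \<notin> S \<and> bef K x y} else 0)"
  proof (rule sum.cong[OF refl])
    fix x assume xK: "x \<in> set K"
    have "{y \<in> set K. bef K x y \<and> bef ?M y x} = (if x \<in> S then {y \<in> set K. y \<notin> S \<and> bef K x y} else {})"
      using bef_asym[OF dK, of x] xK by (auto simp: bef_append bef_filter)
    then show "card {y \<in> set K. bef K x y \<and> bef ?M y x} = (if x \<in> S then card {y \<in> set K. y \<notin> S \<and> bef K x y} else 0)"
      by simp
  qed
  also have "\<dots> = (\<Sum>x\<in>{x \<in> set K. x \<in> S}. card {y \<in> set K. y \<notin> S \<and> bef K x y})"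
    by (rule sum.inter_filter[symmetric]) simp
  also have "{x \<in> set K. x \<in> S} = S" using SK by auto
  finally show ?thesis .
qed

lemma g_decomp:
  assumes dK: "distinct K" and SK: "S \<subseteq> set K" and J: "J = filter (\<lambda>x. x \<in> S) K"
    and tp: "\<tau> permutes {1..length J}"
  shows "g K (act \<tau> J) = IA K (filter (\<lambda>x. x \<notin> S) K @ J) + inv_count (length J) \<tau>"
proof -
  let ?ks = "act \<tau> J"
  have dJ: "distinct J" using dK J by simp
  have sJ: "set J = S" using J SK by auto
  have sks: "set ?ks = S" using set_act[OF dJ tp] sJ by simp
  have fin: "finite S" using SK finite_subset by blast
  have "g K ?ks = (\<Sum>x\<in>S. card {y \<in> set K. bef K x y \<and> (y \<notin> S \<or> bef ?ks y x)})"
    unfolding g_def sks ..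
  also have "\<dots> = (\<Sum>x\<in>S. card {y \<in> set K. y \<notin> S \<and> bef K x y} + card {y \<in> S. bef J x y \<and> bef ?ks y x})"
  proof (rule sum.cong[OF refl])
    fix x assume xS: "x \<in> S"
    have "{y \<in> set K. bef K x y \<and> (y \<notin> S \<or> bef ?ks y x)}
        = {y \<in> set K. y \<notin> S \<and> bef K x y} \<union> {y \<in> S. bef J x y \<and> bef ?ks y x}"
      using SK xS by (auto simp: J bef_filter dest: bef_set)
    moreover have "finite {y \<in> set K. y \<notin> S \<and> bef K x y}" "finite {y \<in> S. bef J x y \<and> bef ?ks y x}"
      using fin by auto
    ultimately show "card {y \<in> set K. bef K x y \<and> (y \<notin> S \<or> bef ?ks y x)}
        = card {y \<in> set K. y \<notin> S \<and> bef K x y} + card {y \<in> S. bef J x y \<and> bef ?ks y x}"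
      by (simp add: card_Un_disjoint disjoint_iff)
  qed
  also have "\<dots> = (\<Sum>x\<in>S. card {y \<in> set K. y \<notin> S \<and> bef K x y}) + (\<Sum>x\<in>S. card {y \<in> S. bef J x y \<and> bef ?ks y x})"
    by (rule sum.distrib)
  also have "(\<Sum>x\<in>S. card {y \<in> S. bef J x y \<and> bef ?ks y x}) = inv_count (length J) \<tau>"
    using inv_bef[OF dJ tp] card_pairs[of S "\<lambda>x y. bef J x y \<and> bef ?ks y x"] fin sJ by simp
  also have "(\<Sum>x\<in>S. card {y \<in> set K. y \<notin> S \<and> bef K x y}) = IA K (filter (\<lambda>x. x \<notin> S) K @ J)"
    using IA_eq[OF dK SK] J by simp
  finally show ?thesis .
qed

lemma shift_sum: "(\<Sum>e<m + (p::nat). if m \<le> e then h (e - m) else (0::complex)) = (\<Sum>e<p. h e)"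
  by (induction p) auto

lemma alpha_mult:
  assumes "\<sigma> \<in> perms p"
  shows "Rp c q p \<sigma> e = (\<Sum>\<rho>\<in>perms p. \<Sum>\<pi>\<in>perms p. if \<rho> \<circ> \<pi> = \<sigma> then q ^ inv_count p \<rho> * Rsum c p \<pi> e else 0)"
proof -
  have "(\<Sum>a\<le>e. alpha q p \<rho> a * Rsum c p \<pi> (e - a)) = q ^ inv_count p \<rho> * Rsum c p \<pi> e"
    if "\<rho> \<in> perms p" for \<rho> \<pi>
  proof -
    have "(\<Sum>a\<le>e. alpha q p \<rho> a * Rsum c p \<pi> (e - a))
        = (\<Sum>a\<le>e. if a = 0 then q ^ inv_count p \<rho> * Rsum c p \<pi> e else 0)"
      using that by (intro sum.cong) (auto simp: alpha_def)
    also have "\<dots> = q ^ inv_count p \<rho> * Rsum c p \<pi> e" by (simp add: sum.delta)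
    finally show ?thesis .
  qed
  then show ?thesis unfolding Rp_def ga_mult_def
    by (intro sum.cong refl) auto
qed

lemma Rsum_sum:
  assumes "\<pi> \<in> perms p"
  shows "(\<Sum>e<p. E (A ! e) * Rsum c p \<pi> e) = (\<Sum>i=1..p. c p i \<pi> * E (A ! (i - 1)))"
proof -
  have "(\<Sum>e<p. E (A ! e) * Rsum c p \<pi> e) = (\<Sum>e<p. \<Sum>i=1..p. if e = i - 1 then c p i \<pi> * E (A ! (i - 1)) else 0)"
    using assms by (intro sum.cong refl) (auto simp: Rsum_def sum_distrib_left intro!: sum.cong)
  also have "\<dots> = (\<Sum>i=1..p. \<Sum>e<p. if e = i - 1 then c p i \<pi> * E (A ! (i - 1)) else 0)"
    by (rule sum.swap)
  also have "\<dots> = (\<Sum>i=1..p. c p i \<pi> * E (A ! (i - 1)))"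
    by (intro sum.cong refl) (auto simp: sum.delta)
  finally show ?thesis .
qed

lemma rhs_S:
  assumes dK: "distinct K" and SK: "S \<subseteq> set K" and cS: "card S = p"
    and J: "J = filter (\<lambda>x. x \<in> S) K" and KS: "KS = filter (\<lambda>x. x \<notin> S) K"
  shows "(\<Sum>e<length B. E (B ! e) * (if length K - p \<le> e
            then q ^ a * conc KS (ga_act p (Rp c q p) J) (e - (length K - p)) B else 0))
       = (\<Sum>\<rho>\<in>perms p. \<Sum>\<pi>\<in>perms p. q ^ a * q ^ inv_count p \<rho> *
            (if B = KS @ act (\<rho> \<circ> \<pi>) J then (\<Sum>i=1..p. c p i \<pi> * E (act (\<rho> \<circ> \<pi>) J ! (i - 1))) else 0))"
proof -
  let ?m = "length K - p"
  let ?R = "Rp c q p"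
  have dJ: "distinct J" using dK J by simp
  have sJ: "set J = S" using J SK by auto
  have lJ: "length J = p" using distinct_card[OF dJ] sJ cS by simp
  have lKS: "length KS = ?m"
    using sum_length_filter_compl[of "\<lambda>x. x \<in> S" K] J KS lJ by simp
  have finP: "finite (perms p)" unfolding perms_def by (rule finite_permutations) simp
  have conc_eq: "conc KS (ga_act p ?R J) e' B = (\<Sum>\<sigma>\<in>perms p. if B = KS @ act \<sigma> J then ?R \<sigma> e' else 0)" for e'
  proof (cases "take ?m B = KS")
    case True
    then have B: "B = KS @ drop ?m B" by (metis append_take_drop_id)
    have eq: "(act \<sigma> J = drop ?m B) = (B = KS @ act \<sigma> J)" for \<sigma>
      using B by (metis same_append_eq)
    have "conc KS (ga_act p ?R J) e' B = ga_act p ?R J e' (drop ?m B)"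
      using True lKS by (simp add: conc_def)
    also have "\<dots> = (\<Sum>\<sigma>\<in>perms p. if B = KS @ act \<sigma> J then ?R \<sigma> e' else 0)"
      unfolding ga_act_def eq ..
    finally show ?thesis .
  next
    case False
    then have "B \<noteq> KS @ act \<sigma> J" for \<sigma> using lKS by auto
    then show ?thesis using False unfolding conc_def lKS by simp
  qed
  have inner: "(\<Sum>e<length B. E (B ! e) * (if ?m \<le> e then ?R \<sigma> (e - ?m) else 0))
      = (\<Sum>\<rho>\<in>perms p. \<Sum>\<pi>\<in>perms p. if \<rho> \<circ> \<pi> = \<sigma> then
            q ^ inv_count p \<rho> * (\<Sum>i=1..p. c p i \<pi> * E (act \<sigma> J ! (i - 1))) else 0)"
    if B: "B = KS @ act \<sigma> J" and sp: "\<sigma> \<in> perms p" for \<sigma>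
  proof -
    have lB: "length B = ?m + p" using B lKS lJ by simp
    have "(\<Sum>e<length B. E (B ! e) * (if ?m \<le> e then ?R \<sigma> (e - ?m) else 0))
        = (\<Sum>e<?m + p. if ?m \<le> e then E (B ! (?m + (e - ?m))) * ?R \<sigma> (e - ?m) else 0)"
      unfolding lB by (intro sum.cong refl) auto
    also have "\<dots> = (\<Sum>e<p. E (B ! (?m + e)) * ?R \<sigma> e)" by (rule shift_sum)
    also have "\<dots> = (\<Sum>e<p. E (act \<sigma> J ! e) * ?R \<sigma> e)"
      using B lKS by (intro sum.cong refl) (metis nth_append_length_plus)
    also have "\<dots> = (\<Sum>e<p. \<Sum>\<rho>\<in>perms p. \<Sum>\<pi>\<in>perms p. if \<rho> \<circ> \<pi> = \<sigma> then
            q ^ inv_count p \<rho> * (E (act \<sigma> J ! e) * Rsum c p \<pi> e) else 0)"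
      unfolding alpha_mult[OF sp] sum_distrib_left by (intro sum.cong refl) simp
    also have "\<dots> = (\<Sum>\<rho>\<in>perms p. \<Sum>e<p. \<Sum>\<pi>\<in>perms p. if \<rho> \<circ> \<pi> = \<sigma> then
            q ^ inv_count p \<rho> * (E (act \<sigma> J ! e) * Rsum c p \<pi> e) else 0)"
      by (rule sum.swap)
    also have "\<dots> = (\<Sum>\<rho>\<in>perms p. \<Sum>\<pi>\<in>perms p. \<Sum>e<p. if \<rho> \<circ> \<pi> = \<sigma> then
            q ^ inv_count p \<rho> * (E (act \<sigma> J ! e) * Rsum c p \<pi> e) else 0)"
      by (rule sum.cong[OF refl]) (rule sum.swap)
    also have "\<dots> = (\<Sum>\<rho>\<in>perms p. \<Sum>\<pi>\<in>perms p. if \<rho> \<circ> \<pi> = \<sigma> then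
            q ^ inv_count p \<rho> * (\<Sum>i=1..p. c p i \<pi> * E (act \<sigma> J ! (i - 1))) else 0)"
    proof (intro sum.cong refl)
      fix \<rho> \<pi> assume "\<pi> \<in> perms p"
      then show "(\<Sum>e<p. if \<rho> \<circ> \<pi> = \<sigma> then q ^ inv_count p \<rho> * (E (act \<sigma> J ! e) * Rsum c p \<pi> e) else 0)
        = (if \<rho> \<circ> \<pi> = \<sigma> then q ^ inv_count p \<rho> * (\<Sum>i=1..p. c p i \<pi> * E (act \<sigma> J ! (i - 1))) else 0)"
        using Rsum_sum[of \<pi> p E "act \<sigma> J" c] by (simp add: sum_distrib_left[symmetric])
    qed
    finally show ?thesis .
  qed
  let ?P = "\<lambda>\<sigma>. B = KS @ act \<sigma> J"
  let ?X = "\<lambda>\<sigma> \<pi>. (\<Sum>i=1..p. c p i \<pi> * E (act \<sigma> J ! (i - 1)))"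
  have "(\<Sum>e<length B. E (B ! e) * (if ?m \<le> e then q ^ a * conc KS (ga_act p ?R J) (e - ?m) B else 0))
      = (\<Sum>e<length B. \<Sum>\<sigma>\<in>perms p. q ^ a * (if ?P \<sigma> then E (B ! e) * (if ?m \<le> e then ?R \<sigma> (e - ?m) else 0) else 0))"
  proof (intro sum.cong refl)
    fix e
    show "E (B ! e) * (if ?m \<le> e then q ^ a * conc KS (ga_act p ?R J) (e - ?m) B else 0)
      = (\<Sum>\<sigma>\<in>perms p. q ^ a * (if ?P \<sigma> then E (B ! e) * (if ?m \<le> e then ?R \<sigma> (e - ?m) else 0) else 0))"
    proof (cases "?m \<le> e")
      case True
      then show ?thesis by (simp add: conc_eq sum_distrib_left; intro sum.cong refl; simp)
    qed (simp add: sum.neutral)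
  qed
  also have "\<dots> = (\<Sum>\<sigma>\<in>perms p. \<Sum>e<length B. q ^ a * (if ?P \<sigma> then E (B ! e) * (if ?m \<le> e then ?R \<sigma> (e - ?m) else 0) else 0))"
    by (rule sum.swap)
  also have "\<dots> = (\<Sum>\<sigma>\<in>perms p. \<Sum>\<rho>\<in>perms p. \<Sum>\<pi>\<in>perms p. if \<sigma> = \<rho> \<circ> \<pi> then
       q ^ a * q ^ inv_count p \<rho> * (if ?P (\<rho> \<circ> \<pi>) then ?X (\<rho> \<circ> \<pi>) \<pi> else 0) else 0)"
  proof (intro sum.cong refl)
    fix \<sigma> assume sp: "\<sigma> \<in> perms p"
    show "(\<Sum>e<length B. q ^ a * (if ?P \<sigma> then E (B ! e) * (if ?m \<le> e then ?R \<sigma> (e - ?m) else 0) else 0))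
      = (\<Sum>\<rho>\<in>perms p. \<Sum>\<pi>\<in>perms p. if \<sigma> = \<rho> \<circ> \<pi> then
       q ^ a * q ^ inv_count p \<rho> * (if ?P (\<rho> \<circ> \<pi>) then ?X (\<rho> \<circ> \<pi>) \<pi> else 0) else 0)"
    proof (cases "?P \<sigma>")
      case True
      have "(\<Sum>e<length B. q ^ a * (if ?P \<sigma> then E (B ! e) * (if ?m \<le> e then ?R \<sigma> (e - ?m) else 0) else 0))
        = q ^ a * (\<Sum>e<length B. E (B ! e) * (if ?m \<le> e then ?R \<sigma> (e - ?m) else 0))"
        using True by (simp add: sum_distrib_left)
      also have "\<dots> = q ^ a * (\<Sum>\<rho>\<in>perms p. \<Sum>\<pi>\<in>perms p. if \<rho> \<circ> \<pi> = \<sigma> then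
            q ^ inv_count p \<rho> * ?X \<sigma> \<pi> else 0)"
        using inner[OF True sp] by simp
      also have "\<dots> = (\<Sum>\<rho>\<in>perms p. \<Sum>\<pi>\<in>perms p. if \<sigma> = \<rho> \<circ> \<pi> then
       q ^ a * q ^ inv_count p \<rho> * (if ?P (\<rho> \<circ> \<pi>) then ?X (\<rho> \<circ> \<pi>) \<pi> else 0) else 0)"
        unfolding sum_distrib_left[of "q ^ a"] using True by (intro sum.cong refl) auto
      finally show ?thesis .
    next
      case False
      then show ?thesis by (auto intro!: sum.neutral)
    qed
  qed
  also have "\<dots> = (\<Sum>\<rho>\<in>perms p. \<Sum>\<sigma>\<in>perms p. \<Sum>\<pi>\<in>perms p. if \<sigma> = \<rho> \<circ> \<pi> then
       q ^ a * q ^ inv_count p \<rho> * (if ?P (\<rho> \<circ> \<pi>) then ?X (\<rho> \<circ> \<pi>) \<pi> else 0) else 0)"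
    by (rule sum.swap)
  also have "\<dots> = (\<Sum>\<rho>\<in>perms p. \<Sum>\<pi>\<in>perms p. \<Sum>\<sigma>\<in>perms p. if \<sigma> = \<rho> \<circ> \<pi> then
       q ^ a * q ^ inv_count p \<rho> * (if ?P (\<rho> \<circ> \<pi>) then ?X (\<rho> \<circ> \<pi>) \<pi> else 0) else 0)"
    by (rule sum.cong[OF refl]) (rule sum.swap)
  also have "\<dots> = (\<Sum>\<rho>\<in>perms p. \<Sum>\<pi>\<in>perms p.
       q ^ a * q ^ inv_count p \<rho> * (if ?P (\<rho> \<circ> \<pi>) then ?X (\<rho> \<circ> \<pi>) \<pi> else 0))"
  proof (intro sum.cong refl)
    fix \<rho> \<pi> assume "\<rho> \<in> perms p" "\<pi> \<in> perms p"
    then have "\<rho> \<circ> \<pi> \<in> perms p" unfolding perms_def by (auto intro: permutes_compose)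
    then show "(\<Sum>\<sigma>\<in>perms p. if \<sigma> = \<rho> \<circ> \<pi> then
       q ^ a * q ^ inv_count p \<rho> * (if ?P (\<rho> \<circ> \<pi>) then ?X (\<rho> \<circ> \<pi>) \<pi> else 0) else 0)
      = q ^ a * q ^ inv_count p \<rho> * (if ?P (\<rho> \<circ> \<pi>) then ?X (\<rho> \<circ> \<pi>) \<pi> else 0)"
      using finP by (simp add: sum.delta)
  qed
  finally show ?thesis .
qed

theorem proposition1:
  fixes q :: complex and c :: "nat \<Rightarrow> nat \<Rightarrow> (nat \<Rightarrow> nat) \<Rightarrow> complex"
    and E :: "'m \<Rightarrow> complex" and K :: "'m list" and p :: nat
  assumes "distinct K" and "1 \<le> p" and "p \<le> length K"
  shows "Eop c E q p (ket K) =
    xi E (Xpow (length K - p)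
      (\<Sum>S\<in>{S. S \<subseteq> set K \<and> card S = p}.
        (\<lambda>e B. q ^ IA K (filter (\<lambda>x. x \<notin> S) K @ filter (\<lambda>x. x \<in> S) K) *
           conc (filter (\<lambda>x. x \<notin> S) K) (ga_act p (Rp c q p) (filter (\<lambda>x. x \<in> S) K)) e B)))"
proof -
  note dK = assms(1)
  let ?m = "length K - p"
  define Subs where "Subs = {S. S \<subseteq> set K \<and> card S = p}"
  define Inj where "Inj = {ks. set ks \<subseteq> set K \<and> length ks = p \<and> distinct ks}"
  define C where "C ks \<pi> = (\<Sum>i=1..p. c p i \<pi> * E (ks ! (\<pi> i - 1)))" for ks \<pi>
  define F where "F ks = (if length ks = p then (\<Sum>\<pi>\<in>perms p. (\<lambda>w. C ks \<pi> *
      fold create (map (\<lambda>i. ks ! (\<pi> i - 1)) [1..<p+1]) (foldr (annih q) ks (ket K)) w)) else 0)" for ks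
  define IAS where "IAS S = IA K (filter (\<lambda>x. x \<notin> S) K @ filter (\<lambda>x. x \<in> S) K)" for S
  have finP: "finite (perms p)" unfolding perms_def by (rule finite_permutations) simp
  have finSubs: "finite Subs" unfolding Subs_def by (rule finite_subset[of _ "Pow (set K)"]) auto
  have finInj: "finite Inj" unfolding Inj_def
    by (rule finite_subset[OF _ finite_lists_length_eq[OF finite_set, of K p]]) auto
  have Eop_eq: "Eop c E q p (ket K) = Sum_any F" unfolding Eop_def F_def C_def ..
  have F_val: "F ks = (\<lambda>w. \<Sum>\<pi>\<in>perms p. C ks \<pi> * ((if distinct ks \<and> set ks \<subseteq> set K then q ^ g K ks else 0)
      * dl (filter (\<lambda>x. x \<notin> set ks) K @ act \<pi> ks) w))" if lks: "length ks = p" for ks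
  proof -
    have "map (\<lambda>i. ks ! (\<pi> i - 1)) [1..<p+1] = act \<pi> ks" for \<pi> unfolding act_def lks ..
    then show ?thesis unfolding F_def using lks
      by (simp add: ket_dl foldr_annih[OF dK] fold_create_dl fun_eq_iff sum_fun_app)
  qed
  have supp: "{ks. F ks \<noteq> 0} \<subseteq> Inj"
  proof
    fix ks assume "ks \<in> {ks. F ks \<noteq> 0}"
    then have nz: "F ks \<noteq> 0" by simp
    then have lks: "length ks = p" unfolding F_def by (auto split: if_splits)
    show "ks \<in> Inj"
    proof (rule ccontr)
      assume "ks \<notin> Inj"
      then have "\<not> (distinct ks \<and> set ks \<subseteq> set K)" using lks unfolding Inj_def by auto
      then have "F ks = 0" using F_val[OF lks] by (auto simp: fun_eq_iff)
      then show False using nz by simp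
    qed
  qed
  have Eop_sum: "Eop c E q p (ket K) = sum F Inj"
    unfolding Eop_eq by (rule Sum_any.expand_superset[OF finInj supp])
  define h where "h = (\<lambda>(S, \<tau>). act \<tau> (filter (\<lambda>x. x \<in> S) K))"
  define Sig where "Sig = Sigma Subs (\<lambda>S. perms p)"
  have Jp: "distinct (filter (\<lambda>x. x \<in> S) K) \<and> set (filter (\<lambda>x. x \<in> S) K) = S
      \<and> length (filter (\<lambda>x. x \<in> S) K) = p" if "S \<in> Subs" for S
  proof -
    have "set (filter (\<lambda>x. x \<in> S) K) = S" using that unfolding Subs_def by auto
    moreover have "distinct (filter (\<lambda>x. x \<in> S) K)" using dK by simp
    ultimately show ?thesis using distinct_card that unfolding Subs_def by fastforce
  qed
  have inj_h: "inj_on h Sig"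
  proof (rule inj_onI)
    fix u v assume u: "u \<in> Sig" and v: "v \<in> Sig" and e: "h u = h v"
    obtain S \<tau> where uu: "u = (S, \<tau>)" by (cases u)
    obtain S' \<tau>' where vv: "v = (S', \<tau>')" by (cases v)
    have S: "S \<in> Subs" "\<tau> \<in> perms p" "S' \<in> Subs" "\<tau>' \<in> perms p" using u v uu vv Sig_def by auto
    have e': "act \<tau> (filter (\<lambda>x. x \<in> S) K) = act \<tau>' (filter (\<lambda>x. x \<in> S') K)"
      using e uu vv by (simp add: h_def)
    have t1: "\<tau> permutes {1..length (filter (\<lambda>x. x \<in> S) K)}" using S(2) Jp[OF S(1)] unfolding perms_def by simp
    have t2: "\<tau>' permutes {1..length (filter (\<lambda>x. x \<in> S') K)}" using S(4) Jp[OF S(3)] unfolding perms_def by simp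
    have "S = set (act \<tau> (filter (\<lambda>x. x \<in> S) K))" using set_act[OF _ t1] Jp[OF S(1)] by simp
    also have "\<dots> = set (act \<tau>' (filter (\<lambda>x. x \<in> S') K))" using e' by simp
    also have "\<dots> = S'" using set_act[OF _ t2] Jp[OF S(3)] by simp
    finally have "S = S'" .
    have t2': "\<tau>' permutes {1..length (filter (\<lambda>x. x \<in> S) K)}" using t2 \<open>S = S'\<close> by simp
    have "\<tau> = \<tau>'" using act_inj[OF _ t1 t2'] e' Jp[OF S(1)] \<open>S = S'\<close> by simp
    then show "u = v" using uu vv \<open>S = S'\<close> by simp
  qed
  have img_h: "h ` Sig = Inj"
  proof
    show "h ` Sig \<subseteq> Inj"
    proof
      fix ks assume "ks \<in> h ` Sig"
      then obtain S \<tau> where S: "S \<in> Subs" "\<tau> \<in> perms p" and ks: "ks = act \<tau> (filter (\<lambda>x. x \<in> S) K)"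
        unfolding Sig_def h_def by auto
      have tp: "\<tau> permutes {1..length (filter (\<lambda>x. x \<in> S) K)}" using S Jp[OF S(1)] unfolding perms_def by auto
      have "set ks = S" using set_act[OF _ tp] Jp[OF S(1)] ks by simp
      moreover have "distinct ks" using distinct_act[OF _ tp] Jp[OF S(1)] ks by simp
      moreover have "length ks = p" using Jp[OF S(1)] ks by simp
      ultimately show "ks \<in> Inj" using S(1) unfolding Inj_def Subs_def by simp
    qed
  next
    show "Inj \<subseteq> h ` Sig"
    proof
      fix ks assume "ks \<in> Inj"
      then have ks: "set ks \<subseteq> set K" "length ks = p" "distinct ks" unfolding Inj_def by auto
      define S where "S = set ks"
      have SS: "S \<in> Subs" using ks distinct_card unfolding Subs_def S_def by auto
      obtain \<tau> where tp: "\<tau> permutes {1..length (filter (\<lambda>x. x \<in> S) K)}"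
          and a: "act \<tau> (filter (\<lambda>x. x \<in> S) K) = ks"
        using act_ex[of "filter (\<lambda>x. x \<in> S) K" ks] Jp[OF SS] ks S_def by metis
      have "(S, \<tau>) \<in> Sig" using SS tp Jp[OF SS] unfolding Sig_def perms_def by auto
      then show "ks \<in> h ` Sig" using a by (intro image_eqI[where x="(S, \<tau>)"]) (auto simp: h_def)
    qed
  qed
  have LHS: "sum F Inj = (\<Sum>S\<in>Subs. \<Sum>\<tau>\<in>perms p. F (act \<tau> (filter (\<lambda>x. x \<in> S) K)))"
  proof -
    have "sum F Inj = sum (F \<circ> h) Sig" using sum.reindex[OF inj_h, of F] img_h by simp
    also have "\<dots> = (\<Sum>S\<in>Subs. \<Sum>\<tau>\<in>perms p. F (act \<tau> (filter (\<lambda>x. x \<in> S) K)))"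
      unfolding Sig_def using sum.Sigma[OF finSubs, of "\<lambda>S. perms p" "\<lambda>S \<tau>. (F \<circ> h) (S, \<tau>)"] finP
      by (simp add: h_def case_prod_unfold)
    finally show ?thesis .
  qed
  have Fterm: "F (act \<tau> (filter (\<lambda>x. x \<in> S) K)) B = (\<Sum>\<pi>\<in>perms p. q ^ IAS S * q ^ inv_count p \<tau> *
      (if B = filter (\<lambda>x. x \<notin> S) K @ act (\<tau> \<circ> \<pi>) (filter (\<lambda>x. x \<in> S) K)
       then (\<Sum>i=1..p. c p i \<pi> * E (act (\<tau> \<circ> \<pi>) (filter (\<lambda>x. x \<in> S) K) ! (i - 1))) else 0))"
    if SS: "S \<in> Subs" and tP: "\<tau> \<in> perms p" for S \<tau> B
  proof -
    let ?J = "filter (\<lambda>x. x \<in> S) K"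
    let ?ks = "act \<tau> ?J"
    have dJ: "distinct ?J" and sJ: "set ?J = S" and lJ: "length ?J = p" using Jp[OF SS] by auto
    have tp: "\<tau> permutes {1..length ?J}" using tP lJ unfolding perms_def by simp
    have sks: "set ?ks = S" using set_act[OF dJ tp] sJ by simp
    have dks: "distinct ?ks" using distinct_act[OF dJ tp] .
    have lks: "length ?ks = p" using lJ by simp
    have SK: "S \<subseteq> set K" using SS unfolding Subs_def by simp
    have gg: "g K ?ks = IAS S + inv_count p \<tau>"
      using g_decomp[OF dK SK refl tp] lJ unfolding IAS_def by simp
    have Ceq: "C ?ks \<pi> = (\<Sum>i=1..p. c p i \<pi> * E (act (\<tau> \<circ> \<pi>) ?J ! (i - 1)))" if pP: "\<pi> \<in> perms p" for \<pi>
      unfolding C_def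
    proof (intro sum.cong refl)
      fix i assume i: "i \<in> {1..p}"
      have pp: "\<pi> permutes {1..p}" using pP unfolding perms_def by simp
      have r: "1 \<le> \<pi> i \<and> \<pi> i \<le> p" using perm_range[OF pp, of i] i by auto
      have "?ks ! (\<pi> i - 1) = ?J ! (\<tau> (Suc (\<pi> i - 1)) - 1)" by (rule nth_act) (use r lJ in arith)
      also have "\<dots> = act (\<tau> \<circ> \<pi>) ?J ! (i - 1)"
      proof -
        have il: "i - 1 < length ?J" using i lJ by auto
        have "Suc (i - 1) = i" using i by auto
        then show ?thesis using nth_act[OF il, of "\<tau> \<circ> \<pi>"] r by simp
      qed
      finally show "c p i \<pi> * E (?ks ! (\<pi> i - 1)) = c p i \<pi> * E (act (\<tau> \<circ> \<pi>) ?J ! (i - 1))" by simp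
    qed
    have acteq: "act \<pi> ?ks = act (\<tau> \<circ> \<pi>) ?J" if pP: "\<pi> \<in> perms p" for \<pi>
      using act_comp[of \<pi> ?J \<tau>] pP lJ unfolding perms_def by simp
    have "F ?ks B = (\<Sum>\<pi>\<in>perms p. C ?ks \<pi> * (q ^ g K ?ks * dl (filter (\<lambda>x. x \<notin> S) K @ act \<pi> ?ks) B))"
      using F_val[OF lks] dks sks SK by simp
    also have "\<dots> = (\<Sum>\<pi>\<in>perms p. q ^ IAS S * q ^ inv_count p \<tau> *
      (if B = filter (\<lambda>x. x \<notin> S) K @ act (\<tau> \<circ> \<pi>) ?J
       then (\<Sum>i=1..p. c p i \<pi> * E (act (\<tau> \<circ> \<pi>) ?J ! (i - 1))) else 0))"
      by (intro sum.cong refl) (simp add: Ceq acteq gg dl_def power_add)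
    finally show ?thesis .
  qed
  show ?thesis
  proof (rule ext)
    fix B
    have "Eop c E q p (ket K) B = (\<Sum>S\<in>Subs. \<Sum>\<tau>\<in>perms p. F (act \<tau> (filter (\<lambda>x. x \<in> S) K)) B)"
      unfolding Eop_sum LHS by (simp add: sum_fun_app)
    also have "\<dots> = (\<Sum>S\<in>Subs. \<Sum>e<length B. E (B ! e) * (if ?m \<le> e
            then q ^ IAS S * conc (filter (\<lambda>x. x \<notin> S) K) (ga_act p (Rp c q p) (filter (\<lambda>x. x \<in> S) K)) (e - ?m) B else 0))"
    proof (intro sum.cong refl)
      fix S assume SS: "S \<in> Subs"
      then have SK: "S \<subseteq> set K" and cS: "card S = p" unfolding Subs_def by auto
      show "(\<Sum>\<tau>\<in>perms p. F (act \<tau> (filter (\<lambda>x. x \<in> S) K)) B) = (\<Sum>e<length B. E (B ! e) * (if ?m \<le> e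
            then q ^ IAS S * conc (filter (\<lambda>x. x \<notin> S) K) (ga_act p (Rp c q p) (filter (\<lambda>x. x \<in> S) K)) (e - ?m) B else 0))"
        unfolding rhs_S[OF dK SK cS refl refl] using Fterm[OF SS] by simp
    qed
    also have "\<dots> = (\<Sum>e<length B. \<Sum>S\<in>Subs. E (B ! e) * (if ?m \<le> e
            then q ^ IAS S * conc (filter (\<lambda>x. x \<notin> S) K) (ga_act p (Rp c q p) (filter (\<lambda>x. x \<in> S) K)) (e - ?m) B else 0))"
      by (rule sum.swap)
    also have "\<dots> = xi E (Xpow (length K - p)
      (\<Sum>S\<in>{S. S \<subseteq> set K \<and> card S = p}.
        (\<lambda>e B. q ^ IA K (filter (\<lambda>x. x \<notin> S) K @ filter (\<lambda>x. x \<in> S) K) *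
           conc (filter (\<lambda>x. x \<notin> S) K) (ga_act p (Rp c q p) (filter (\<lambda>x. x \<in> S) K)) e B))) B"
      unfolding xi_def Xpow_def Subs_def[symmetric] IAS_def[symmetric]
      by (intro sum.cong refl) (simp add: sum_fun_app sum_distrib_left)
    finally show "Eop c E q p (ket K) B = xi E (Xpow (length K - p)
      (\<Sum>S\<in>{S. S \<subseteq> set K \<and> card S = p}.
        (\<lambda>e B. q ^ IA K (filter (\<lambda>x. x \<notin> S) K @ filter (\<lambda>x. x \<in> S) K) *
           conc (filter (\<lambda>x. x \<notin> S) K) (ga_act p (Rp c q p) (filter (\<lambda>x. x \<in> S) K)) e B))) B" .
  qed
qed

end
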